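(* Assume the setting of the context. The family $(E_g\cap Q_{g(u)})_{g\in\Gamma}$ is locally finite in $\tilde L$.
   Context: Let $\tilde L=\{(z,\alpha,r)\in\mathbb C\times\mathbb R\times\mathbb R_{>0} : |z|<r\}$, $L=\{(z,w)\in\mathbb C^2: |z|<|w|\}$, and $\pi:\tilde L\to L$, $\pi(z,\alpha,r)=(z,re^{i\alpha})$ (a universal covering). Equip $\mathbb C^2$ with the real symmetric bilinear form $\langle (z_1,w_1),(z_2,w_2)\rangle=\mathrm{Re}(z_1\bar z_2-w_1\bar w_2)$. Let $G=\{(z,w):|z|^2-|w|^2=-1\}\subset L$, identified with $\mathrm{SU}(1,1)$ via $\begin{pmatrix} w&z\\ \bar z&\bar w\end{pmatrix}\mapsto (z,\bar w)$; left multiplication by $g\leftrightarrow(z_g,\bar w_g)$ extends to the $\mathbb R$-linear isometry $(z,v)\mapsto (w_g z+z_g v,\ \bar z_g z+\bar w_g v)$ of $\mathbb C^2$ preserving $L$. Let $\tilde G=\{(z,\alpha,r)\in\tilde L: |z|^2=r^2-1\}=\pi^{-1}(G)$, the universal cover $\widetilde{\mathrm{SU}}(1,1)$ with identity $e=(0,0,1)$; the left action of $G$ on $L$ lifts to a left action of $\tilde G$ on $\tilde L$ extending left multiplication on $\tilde G$. Elements of $\tilde G$ act on the unit disk $\mathbb D$ through $\mathrm{PSU}(1,1)$: $(z,\alpha,r)$ with $w=re^{-i\alpha}$ acts by $\zeta\mapsto (w\zeta+z)/(\bar z\zeta+\bar w)$. For $g\in\tilde G$ with $\bar g=\pi(g)$,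 let $\bar I_{\bar g}=\{a\in L:\langle \bar g,a\rangle\le -1\}$, $\bar E_{\bar g}=\{a\in L:\langle\bar g,a\rangle=-1\}$; let $I_g$, $E_g$ be the connected components of $\pi^{-1}(\bar I_{\bar g})$, $\pi^{-1}(\bar E_{\bar g})$ containing $g$; $E_g$ separates $\tilde L$ into two components, the closure of one being $I_g$; let $H_g$ be the closure of the other (so $\partial H_g=E_g$). Let $\Gamma\subset\tilde G$ be a discrete subgroup of finite level $k$ (the index of $\Gamma\cap Z$ in the infinite cyclic centre $Z$ of $\tilde G$), let $\bar\Gamma$ be its image in $\mathrm{PSU}(1,1)$, and let $u\in\mathbb D$ be a point fixed by a nontrivial element of $\bar\Gamma$, with isotropy group $\bar\Gamma_u$ of order $p$. Assume $p>k$ and (after conjugation) $u=0$. For $x$ in the orbit $\Gamma(u)$ let $T(x)=\{g\in\Gamma: g(u)=x\}$ and $Q_x=\bigcap_{g\in T(x)}H_g$. *)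

theory Defs
  imports "HOL-Analysis.Analysis"
begin

text \<open>Points of the universal cover tilde L are triples (z, alpha, r).\<close>
type_synonym pt = "complex \<times> real \<times> real"

definition Lt :: "pt set" where
  "Lt = {(z, \<alpha>, r). r > 0 \<and> cmod z < r}"

definition Lset :: "(complex \<times> complex) set" where
  "Lset = {(z, w). cmod z < cmod w}"

definition proj :: "pt \<Rightarrow> complex \<times> complex" where
  "proj p = (case p of (z, \<alpha>, r) \<Rightarrow> (z, complex_of_real r * cis \<alpha>))"

definition form :: "complex \<times> complex \<Rightarrow> complex \<times> complex \<Rightarrow> real" where
  "form a b = Re (fst a * cnj (fst b) - snd a * cnj (snd b))"

definition Gt :: "pt set" where
  "Gt = {(z, \<alpha>, r). (z, \<alpha>, r) \<in> Lt \<and> (cmod z)^2 = r^2 - 1}"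

definition e_t :: pt where "e_t = (0, 0, 1)"

text \<open>Lifted left action of tilde G on tilde L (restricting to the group law on tilde G).
  For g = (zg, ag, rg) with image (zg, vg) in G (vg = conj wg) and a = (z, al, r) with
  image (z, v), the image of g.a in L is (wg z + zg v, conj zg z + vg v); the new
  argument is ag + al + Arg(1 + t) with t = conj zg z / (vg v), |t| < 1; this is the
  continuous lift that restricts to the identity at g = e.\<close>
definition act :: "pt \<Rightarrow> pt \<Rightarrow> pt" where
  "act g a = (case g of (zg, ag, rg) \<Rightarrow> case a of (z, al, r) \<Rightarrow>
     let vg = complex_of_real rg * cis ag; wg = cnj vg; v = complex_of_real r * cis al;
         t = cnj zg * z / (vg * v)
     in (wg * z + zg * v, ag + al + Arg (1 + t), cmod (cnj zg * z + vg * v)))"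

text \<open>Action of tilde G on the unit disk through PSU(1,1).\<close>
definition mob :: "pt \<Rightarrow> complex \<Rightarrow> complex" where
  "mob g \<zeta> = (case g of (z, \<alpha>, r) \<Rightarrow>
     let w = complex_of_real r * cis (- \<alpha>) in (w * \<zeta> + z) / (cnj z * \<zeta> + cnj w))"

text \<open>Centre of tilde G (the lifts of +-I).\<close>
definition Zc :: "pt set" where
  "Zc = {c \<in> Gt. \<forall>g \<in> Gt. act c g = act g c}"

definition subgroup_Gt :: "pt set \<Rightarrow> bool" where
  "subgroup_Gt \<Gamma> \<longleftrightarrow> \<Gamma> \<subseteq> Gt \<and> e_t \<in> \<Gamma> \<and> (\<forall>g\<in>\<Gamma>. \<forall>h\<in>\<Gamma>. act g h \<in> \<Gamma>)
     \<and> (\<forall>g\<in>\<Gamma>. \<exists>h\<in>\<Gamma>. act g h = e_t \<and> act h g = e_t)"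

text \<open>Finite level k: the index of Gamma \<inter> Z in Z is k. The centre Z is infinite
  cyclic, generated by (0, pi, 1), so this means Gamma \<inter> Z is generated by (0, k pi, 1).\<close>
definition has_level :: "pt set \<Rightarrow> nat \<Rightarrow> bool" where
  "has_level \<Gamma> k \<longleftrightarrow> k > 0 \<and>
     \<Gamma> \<inter> Zc = {(0, of_int (int k * n) * pi, 1) | n. True}"

definition Ebar :: "complex \<times> complex \<Rightarrow> (complex \<times> complex) set" where
  "Ebar gb = {a \<in> Lset. form gb a = -1}"

definition Ibar :: "complex \<times> complex \<Rightarrow> (complex \<times> complex) set" where
  "Ibar gb = {a \<in> Lset. form gb a \<le> -1}"

definition Eg :: "pt \<Rightarrow> pt set" where
  "Eg g = connected_component_set (Lt \<inter> proj -` Ebar (proj g)) g"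

definition Ig :: "pt \<Rightarrow> pt set" where
  "Ig g = connected_component_set (Lt \<inter> proj -` Ibar (proj g)) g"

definition Hg :: "pt \<Rightarrow> pt set" where
  "Hg g = Lt \<inter> closure (\<Union>{C \<in> components (Lt - Eg g). Lt \<inter> closure C \<noteq> Ig g})"

definition Qx :: "pt set \<Rightarrow> complex \<Rightarrow> complex \<Rightarrow> pt set" where
  "Qx \<Gamma> u x = \<Inter>{Hg g | g. g \<in> \<Gamma> \<and> mob g u = x}"

text \<open>Isotropy group in PSU(1,1) (elements as maps of the unit disk).\<close>
definition isotropy_bar :: "pt set \<Rightarrow> complex \<Rightarrow> (complex \<Rightarrow> complex) set" where
  "isotropy_bar \<Gamma> u = {(\<lambda>\<zeta>. if cmod \<zeta> < 1 then mob g \<zeta> else 0) | g. g \<in> \<Gamma> \<and> mob g u = u}"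

end

theory Submission
  imports Defs
begin

definition inv_t :: "pt \<Rightarrow> pt" where "inv_t g = (case g of (z,a,r) \<Rightarrow> (-z,-a,r))"
definition Mg :: "pt \<Rightarrow> complex \<times> complex \<Rightarrow> complex \<times> complex" where
 "Mg g p = (case g of (zg,ag,rg) \<Rightarrow> (cnj (of_real rg * cis ag) * fst p + zg * snd p,
      cnj zg * fst p + (of_real rg * cis ag) * snd p))"

lemma act_eq: "act (zg,ag,rg) (z,al,r) =
  (cnj (of_real rg * cis ag) * z + zg * (of_real r * cis al),
   ag + al + Arg (1 + cnj zg * z / ((of_real rg * cis ag) * (of_real r * cis al))),
   cmod (cnj zg * z + (of_real rg * cis ag) * (of_real r * cis al)))"
  by (simp add: act_def Let_def)

lemma Lt_iff: "(z,a,r) \<in> Lt \<longleftrightarrow> 0 < r \<and> cmod z < r"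
  by (simp add: Lt_def)

lemma Gt_iff: "(z,a,r) \<in> Gt \<longleftrightarrow> 0 < r \<and> cmod z < r \<and> (cmod z)^2 = r^2 - 1"
  by (simp add: Gt_def Lt_def)

lemma Gt_iff2: "(z,a,r) \<in> Gt \<longleftrightarrow> 1 \<le> r \<and> (cmod z)^2 = r^2 - 1"
proof
  assume "(z,a,r) \<in> Gt"
  then have h0: "0 < r" "(cmod z)^2 = r^2 - 1" by (auto simp: Gt_iff)
  have "r^2 \<ge> 1" using h0 by (metis diff_ge_0_iff_ge zero_le_power2)
  show "1 \<le> r \<and> (cmod z)^2 = r^2 - 1"
  proof -
    have "\<not> r < 1"
    proof
      assume "r < 1"
      then have "r * r < 1 * 1" using \<open>0 < r\<close> by (intro mult_strict_mono) auto
      then show False using \<open>r^2 \<ge> 1\<close> by (simp add: power2_eq_square)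
    qed
    then show ?thesis using h0 by simp
  qed
next
  assume h: "1 \<le> r \<and> (cmod z)^2 = r^2 - 1"
  then have "(cmod z)^2 < r^2" by simp
  then have "cmod z < r" using h by (smt (verit) norm_ge_zero power_mono)
  then show "(z,a,r) \<in> Gt" using h by (simp add: Gt_iff)
qed

lemma Gt_sub_Lt: "Gt \<subseteq> Lt" by (auto simp: Gt_def)

lemma t_small:
  assumes "0 < rg" "cmod zg < rg" "0 < r" "cmod z < r"
  shows "cmod (cnj zg * z / ((of_real rg * cis ag) * (of_real r * cis al))) < 1"
proof -
  have "cmod (cnj zg * z / ((of_real rg * cis ag) * (of_real r * cis al))) = cmod zg * cmod z / (rg * r)"
    using assms by (simp add: norm_mult norm_divide)
  also have "\<dots> < 1" using assms
    by (simp add: mult_strict_mono)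
  finally show ?thesis .
qed

lemma Re_1_plus: "cmod t < 1 \<Longrightarrow> Re (1 + t) > 0"
  using abs_Re_le_cmod[of t] by simp

lemma abs_Arg_small: "cmod t < 1 \<Longrightarrow> \<bar>Arg (1 + t)\<bar> < pi/2"
  using Arg_Re_pos Re_1_plus by blast

lemma proj_act:
  assumes g: "(zg,ag,rg) \<in> Lt" and c: "(z,al,r) \<in> Lt"
  shows "proj (act (zg,ag,rg) (z,al,r)) = Mg (zg,ag,rg) (proj (z,al,r))"
proof -
  define vg where "vg = of_real rg * cis ag"
  define v where "v = of_real r * cis al"
  define t where "t = cnj zg * z / (vg * v)"
  have pos: "0 < rg" "cmod zg < rg" "0 < r" "cmod z < r" using g c by (auto simp: Lt_iff)
  have tl: "cmod t < 1" unfolding t_def vg_def v_def using t_small pos by blast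
  have nz: "1 + t \<noteq> 0" using Re_1_plus[OF tl] by (metis zero_complex.simps(1) less_irrefl)
  have vv: "vg * v \<noteq> 0" using pos by (simp add: vg_def v_def)
  have X: "cnj zg * z + vg * v = vg * v * (1 + t)" using vv by (simp add: t_def distrib_left)
  have nvg: "cmod vg = rg" "cmod v = r" using pos by (simp_all add: vg_def v_def norm_mult)
  have N: "cmod (cnj zg * z + vg * v) = rg * r * cmod (1+t)"
    by (simp only: X norm_mult nvg)
  have "complex_of_real (cmod (cnj zg * z + vg * v)) * cis (ag + al + Arg (1 + t))
      = complex_of_real (rg * r * cmod (1+t)) * (cis ag * cis al * cis (Arg (1+t)))"
    by (simp only: N cis_mult[symmetric])
  also have "\<dots> = complex_of_real (rg * r) * cis ag * cis al * (of_real (cmod (1+t)) * cis (Arg (1+t)))"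
    by (simp add: algebra_simps)
  also have "of_real (cmod (1+t)) * cis (Arg (1+t)) = 1 + t"
    using rcis_cmod_Arg[of "1+t"] by (simp add: rcis_def)
  also have "complex_of_real (rg * r) * cis ag * cis al * (1 + t) = vg * v * (1 + t)"
    by (simp add: vg_def v_def)
  also have "\<dots> = cnj zg * z + vg * v" by (rule X[symmetric])
  finally have F: "complex_of_real (cmod (cnj zg * z + vg * v)) * cis (ag + al + Arg (1 + t)) = cnj zg * z + vg * v" .
  have "act (zg,ag,rg) (z,al,r) = (cnj vg * z + zg * v, ag + al + Arg (1 + t), cmod (cnj zg * z + vg * v))"
    unfolding act_eq vg_def v_def t_def ..
  then show ?thesis using F
    by (simp add: proj_def Mg_def vg_def v_def)
qed

lemma form_Mg:
  assumes g: "(zg,ag,rg) \<in> Gt"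
  shows "form (Mg (zg,ag,rg) p) (Mg (zg,ag,rg) q) = form p q"
proof -
  obtain z1 v1 where p: "p = (z1,v1)" by fastforce
  obtain z2 v2 where q: "q = (z2,v2)" by fastforce
  define vg where "vg = of_real rg * cis ag"
  have vgn: "vg * cnj vg = of_real (rg^2)"
    by (simp add: vg_def power2_eq_square cis_cnj cis_mult algebra_simps)
  have zgn: "zg * cnj zg = of_real (rg^2 - 1)"
  proof -
    have "zg * cnj zg = of_real((cmod zg)^2)" by (metis complex_norm_square)
    moreover have "(cmod zg)^2 = rg^2 - 1" using g by (simp add: Gt_iff)
    ultimately show ?thesis by (metis of_real_diff of_real_1)
  qed
  have E: "(cnj vg * z1 + zg * v1) * cnj (cnj vg * z2 + zg * v2) - (cnj zg * z1 + vg * v1) * cnj (cnj zg * z2 + vg * v2)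
     = (vg * cnj vg - zg * cnj zg) * (z1 * cnj z2 - v1 * cnj v2)"
    by (simp add: algebra_simps)
  have 1: "vg * cnj vg - zg * cnj zg = 1" using vgn zgn by simp
  have "form (Mg (zg,ag,rg) p) (Mg (zg,ag,rg) q) = Re ((vg * cnj vg - zg * cnj zg) * (z1 * cnj z2 - v1 * cnj v2))"
    by (simp only: form_def Mg_def p q prod.case fst_conv snd_conv vg_def[symmetric] E)
  then show ?thesis using 1 by (simp add: form_def p q)
qed

lemma form_self: "form p p = (cmod (fst p))^2 - (cmod (snd p))^2"
  unfolding form_def cmod_power2 by (simp add: power2_eq_square)

lemma proj_Lt: "(z,a,r) \<in> Lt \<Longrightarrow> proj (z,a,r) = (z, of_real r * cis a)"
  by (simp add: proj_def)

lemma act_Lt: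
  assumes g: "g \<in> Gt" and c: "c \<in> Lt"
  shows "act g c \<in> Lt"
proof -
  obtain zg ag rg where gg: "g = (zg,ag,rg)" by (cases g) auto
  obtain z al r where cc: "c = (z,al,r)" by (cases c) auto
  obtain z' al' r' where aa: "act g c = (z',al',r')" by (cases "act g c") auto
  have r'0: "r' \<ge> 0" using aa gg cc by (simp add: act_eq) (metis norm_ge_zero)
  have gL: "g \<in> Lt" using g Gt_sub_Lt by auto
  have "proj (act g c) = Mg g (proj c)" using proj_act gL c gg cc by simp
  then have "form (proj (act g c)) (proj (act g c)) = form (proj c) (proj c)"
    using form_Mg g gg by simp
  then have "(cmod z')^2 - r'^2 = (cmod z)^2 - r^2"
    using aa cc c r'0 by (simp add: form_self proj_def norm_mult Lt_iff)
  moreover have "(cmod z)^2 < r^2" using c cc by (simp add: Lt_iff power_strict_mono)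
  ultimately have "(cmod z')^2 < r'^2" by simp
  then have "cmod z' < r'" using r'0 by (smt (verit) norm_ge_zero power_mono)
  moreover have "0 < r'" using \<open>cmod z' < r'\<close> norm_ge_zero[of z'] by linarith
  ultimately show ?thesis using aa by (simp add: Lt_iff)
qed

lemma inv_Gt: "g \<in> Gt \<Longrightarrow> inv_t g \<in> Gt"
  by (cases g) (auto simp: inv_t_def Gt_iff)

lemma inv_inv: "inv_t (inv_t g) = g"
  by (cases g) (auto simp: inv_t_def)

lemma Mg_inv:
  assumes g: "g \<in> Gt"
  shows "Mg g (Mg (inv_t g) p) = p"
proof -
  obtain zg ag rg where gg: "g = (zg,ag,rg)" by (cases g) auto
  obtain z v where pp: "p = (z,v)" by fastforce
  define vg where "vg = of_real rg * cis ag"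
  have vgn: "vg * cnj vg = of_real (rg^2)"
    by (simp add: vg_def power2_eq_square cis_cnj cis_mult algebra_simps)
  have zgn: "zg * cnj zg = of_real (rg^2 - 1)"
  proof -
    have "zg * cnj zg = of_real((cmod zg)^2)" by (metis complex_norm_square)
    moreover have "(cmod zg)^2 = rg^2 - 1" using g gg by (simp add: Gt_iff)
    ultimately show ?thesis by (metis of_real_diff of_real_1)
  qed
  have 1: "vg * cnj vg - zg * cnj zg = 1" using vgn zgn by simp
  have iv: "of_real rg * cis (- ag) = cnj vg" by (simp add: vg_def cis_cnj)
  have "Mg g (Mg (inv_t g) p) = (cnj vg * (vg * z + - zg * v) + zg * (cnj (- zg) * z + cnj vg * v),
        cnj zg * (vg * z + - zg * v) + vg * (cnj (- zg) * z + cnj vg * v))"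
    by (simp only: Mg_def inv_t_def gg pp prod.case fst_conv snd_conv iv complex_cnj_cnj vg_def[symmetric])
  also have "\<dots> = ((vg * cnj vg - zg * cnj zg) * z, (vg * cnj vg - zg * cnj zg) * v)"
    by (simp add: algebra_simps)
  finally show ?thesis using 1 pp by simp
qed

lemma cis_eq_imp: "cis a = cis b \<Longrightarrow> \<exists>n::int. a = b + 2 * pi * n"
proof -
  assume "cis a = cis b"
  then have "sin a = sin b \<and> cos a = cos b"
    by (metis cis.sel(1) cis.sel(2))
  then show ?thesis using sin_cos_eq_iff by blast
qed

lemma eq_principle:
  assumes X: "X \<in> Lt" and Y: "Y \<in> Lt" and P: "proj X = proj Y"
    and A: "\<bar>fst (snd X) - fst (snd Y)\<bar> < 2 * pi"
  shows "X = Y"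
proof -
  obtain z a r where xx: "X = (z,a,r)" by (cases X) auto
  obtain z' a' r' where yy: "Y = (z',a',r')" by (cases Y) auto
  have r0: "r > 0" "r' > 0" using X Y xx yy by (auto simp: Lt_iff)
  have zz: "z = z'" and w: "of_real r * cis a = of_real r' * cis a'"
    using P xx yy by (auto simp: proj_def)
  have "cmod (of_real r * cis a) = cmod (of_real r' * cis a')" using w by simp
  then have rr: "r = r'" using r0 by (simp add: norm_mult)
  then have "cis a = cis a'" using w r0 by simp
  then obtain n :: int where n: "a = a' + 2 * pi * n" using cis_eq_imp by blast
  have "\<bar>2 * pi * n\<bar> < 2 * pi" using A xx yy n by simp
  then have "\<bar>real_of_int n\<bar> < 1" by (simp add: abs_mult)
  then have "n = 0" by linarith
  then show ?thesis using xx yy zz rr n by simp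
qed

lemma act_angle:
  assumes g: "(zg,ag,rg) \<in> Lt" and c: "(z,al,r) \<in> Lt"
  shows "\<bar>fst (snd (act (zg,ag,rg) (z,al,r))) - (ag + al)\<bar> < pi / 2"
proof -
  have pos: "0 < rg" "cmod zg < rg" "0 < r" "cmod z < r" using g c by (auto simp: Lt_iff)
  have tl: "cmod (cnj zg * z / ((of_real rg * cis ag) * (of_real r * cis al))) < 1"
    using t_small pos by blast
  show ?thesis using abs_Arg_small[OF tl] by (simp add: act_eq)
qed

lemma act_inv:
  assumes g: "g \<in> Gt" and b: "b \<in> Lt"
  shows "act g (act (inv_t g) b) = b"
proof -
  obtain zg ag rg where gg: "g = (zg,ag,rg)" by (cases g) auto
  obtain z al r where bb: "b = (z,al,r)" by (cases b) auto
  have ig: "inv_t g \<in> Gt" using inv_Gt g by blast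
  have c: "act (inv_t g) b \<in> Lt" using act_Lt ig b by blast
  obtain z1 al1 r1 where cc: "act (inv_t g) b = (z1,al1,r1)" by (cases "act (inv_t g) b") auto
  have gL: "g \<in> Lt" and igL: "inv_t g \<in> Lt" using g ig Gt_sub_Lt by auto
  have "proj (act g (act (inv_t g) b)) = Mg g (proj (act (inv_t g) b))"
    using proj_act gL c gg cc by simp
  also have "proj (act (inv_t g) b) = Mg (inv_t g) (proj b)"
    using proj_act igL b bb by (simp add: inv_t_def gg)
  finally have P: "proj (act g (act (inv_t g) b)) = proj b" using Mg_inv g by simp
  have a1: "\<bar>al1 - (- ag + al)\<bar> < pi/2"
    using act_angle[of "-zg" "-ag" rg z al r] igL b cc by (simp add: inv_t_def gg bb)
  have a2: "\<bar>fst (snd (act g (act (inv_t g) b))) - (ag + al1)\<bar> < pi/2"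
    using act_angle[of zg ag rg z1 al1 r1] gL c cc gg by simp
  have "\<bar>fst (snd (act g (act (inv_t g) b))) - fst (snd b)\<bar> < 2 * pi"
    using a1 a2 pi_gt_zero bb by (simp only: fst_conv snd_conv)
  then show ?thesis using eq_principle act_Lt g c b P by blast
qed

lemma act_inv2:
  assumes g: "g \<in> Gt" and b: "b \<in> Lt"
  shows "act (inv_t g) (act g b) = b"
  using act_inv[OF inv_Gt[OF g] b] by (simp add: inv_inv)

lemma act_e: "g \<in> Gt \<Longrightarrow> act g e_t = g"
  by (cases g) (auto simp: act_eq e_t_def Gt_iff norm_mult)

lemma act_rot_left: "act (0, th, 1) (z, al, r) = (cis (- th) * z, th + al, cmod (cis th * (of_real r * cis al)))"
  by (simp add: act_eq cis_cnj)

lemma act_rot_right: "(zg,ag,rg) \<in> Gt \<Longrightarrow> act (zg,ag,rg) (0, th, 1) = (zg * cis th, ag + th, rg)"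
  by (auto simp: act_eq Gt_iff norm_mult)

lemma act_alt: "act g c = (cnj (of_real (snd (snd g)) * cis (fst (snd g))) * fst c + fst g * (of_real (snd (snd c)) * cis (fst (snd c))),
   fst (snd g) + fst (snd c) + Arg (1 + cnj (fst g) * fst c / ((of_real (snd (snd g)) * cis (fst (snd g))) * (of_real (snd (snd c)) * cis (fst (snd c))))),
   cmod (cnj (fst g) * fst c + (of_real (snd (snd g)) * cis (fst (snd g))) * (of_real (snd (snd c)) * cis (fst (snd c)))))"
  by (cases g; cases c) (simp add: act_eq)

lemma open_Lt: "open Lt"
proof -
  have "Lt = {p. 0 < snd (snd p)} \<inter> {p. cmod (fst p) < snd (snd p)}"
    by (auto simp: Lt_def)
  moreover have "open {p::pt. 0 < snd (snd p)}"
    by (intro open_Collect_less continuous_intros)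
  moreover have "open {p::pt. cmod (fst p) < snd (snd p)}"
    by (intro open_Collect_less continuous_intros)
  ultimately show ?thesis by (metis open_Int)
qed

lemma cont_act2: "continuous_on (Lt \<times> Lt) (\<lambda>p. act (fst p) (snd p))"
proof -
  have nz: "\<And>p. p \<in> Lt \<times> Lt \<Longrightarrow> (of_real (snd (snd (fst p))) * cis (fst (snd (fst p)))) * (of_real (snd (snd (snd p))) * cis (fst (snd (snd p)))) \<noteq> (0::complex)"
    by (auto simp: Lt_def)
  have np: "\<And>p. p \<in> Lt \<times> Lt \<Longrightarrow> 1 + cnj (fst (fst p)) * fst (snd p) / ((of_real (snd (snd (fst p))) * cis (fst (snd (fst p)))) * (of_real (snd (snd (snd p))) * cis (fst (snd (snd p))))) \<notin> \<real>\<^sub>\<le>\<^sub>0"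
  proof -
    fix p :: "pt \<times> pt" assume "p \<in> Lt \<times> Lt"
    then obtain zg ag rg z al r where pp: "p = ((zg,ag,rg),(z,al,r))" and
      g: "(zg,ag,rg) \<in> Lt" and c: "(z,al,r) \<in> Lt" by (cases p) auto
    have pos: "0 < rg" "cmod zg < rg" "0 < r" "cmod z < r" using g c by (auto simp: Lt_iff)
    have "Re (1 + cnj zg * z / ((of_real rg * cis ag) * (of_real r * cis al))) > 0"
      using Re_1_plus t_small pos by blast
    then show "?thesis p" using pp by (auto simp: complex_nonpos_Reals_iff)
  qed
  show ?thesis
    unfolding act_alt
    apply (intro continuous_intros continuous_on_Arg' nz np)
     apply (use nz in blast)
    apply blast
    done
qed

lemma cont_act: "g \<in> Lt \<Longrightarrow> continuous_on Lt (act g)"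
proof -
  assume g: "g \<in> Lt"
  have "continuous_on Lt ((\<lambda>p. act (fst p) (snd p)) \<circ> (\<lambda>c. (g, c)))"
  proof -
    have "(\<lambda>c. (g,c)) ` Lt \<subseteq> Lt \<times> Lt" using g by blast
    moreover have "continuous_on Lt (\<lambda>c. (g,c))"
      by (intro continuous_on_Pair continuous_on_const continuous_on_id)
    ultimately show ?thesis using continuous_on_compose2[OF cont_act2, of Lt "\<lambda>c. (g,c)"]
      by (simp add: o_def)
  qed
  then show ?thesis by (simp add: o_def)
qed

lemma homeo_act: "g \<in> Gt \<Longrightarrow> homeomorphism Lt Lt (act g) (act (inv_t g))"
proof -
  assume g: "g \<in> Gt"
  have ig: "inv_t g \<in> Gt" using inv_Gt g by blast
  have s1: "act g ` Lt \<subseteq> Lt" using act_Lt g by blast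
  have s2: "act (inv_t g) ` Lt \<subseteq> Lt" using act_Lt ig by blast
  have e1: "act g ` Lt = Lt"
  proof
    show "Lt \<subseteq> act g ` Lt"
    proof
      fix b assume b: "b \<in> Lt"
      then have "b = act g (act (inv_t g) b)" using act_inv g by metis
      then show "b \<in> act g ` Lt" using s2 b by blast
    qed
  qed (rule s1)
  have e2: "act (inv_t g) ` Lt = Lt"
  proof
    show "Lt \<subseteq> act (inv_t g) ` Lt"
    proof
      fix b assume b: "b \<in> Lt"
      then have "b = act (inv_t g) (act g b)" using act_inv2 g by metis
      then show "b \<in> act (inv_t g) ` Lt" using s1 b by blast
    qed
  qed (rule s2)
  show ?thesis unfolding homeomorphism_def
    using e1 e2 cont_act g ig Gt_sub_Lt act_inv act_inv2 by blast
qed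

lemma homeo_inj: assumes "homeomorphism Lt Lt f f'" shows "inj_on f Lt"
proof (rule inj_on_inverseI[where g=f'])
  fix x assume "x \<in> Lt" then show "f' (f x) = x" using assms homeomorphism_apply1 by blast
qed

lemma homeo_cc:
  assumes h: "homeomorphism Lt Lt f f'" and S: "S \<subseteq> Lt" and x: "x \<in> Lt"
  shows "connected_component_set (f ` S) (f x) = f ` connected_component_set S x"
proof (cases "x \<in> S")
  case True
  have "homeomorphism S (f ` S) f f'"
    by (rule homeomorphism_of_subsets[OF h S order_refl refl])
  then show ?thesis using connected_component_set_homeomorphism True by blast
next
  case False
  have "f x \<notin> f ` S" using False homeo_inj[OF h] S x by (meson inj_on_image_mem_iff)
  then have "connected_component_set (f ` S) (f x) = {}" by (subst connected_component_eq_empty) simp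
  moreover have "connected_component_set S x = {}" using False by (subst connected_component_eq_empty) simp
  ultimately show ?thesis by (metis image_empty)
qed

lemma homeo_closure_sub:
  assumes h: "homeomorphism Lt Lt f f'" and C: "C \<subseteq> Lt"
  shows "f ` (Lt \<inter> closure C) \<subseteq> Lt \<inter> closure (f ` C)"
proof
  fix y assume "y \<in> f ` (Lt \<inter> closure C)"
  then obtain x where x: "x \<in> Lt" "x \<in> closure C" and y: "y = f x" by blast
  from x(2) obtain s where s: "\<forall>n. s n \<in> C" "s \<longlonglongrightarrow> x" unfolding closure_sequential by blast
  have "continuous_on Lt f" using h by (simp add: homeomorphism_def)
  then have ic: "isCont f x" using x(1) open_Lt by (simp add: continuous_on_eq_continuous_at)
  have lim: "(\<lambda>n. f (s n)) \<longlonglongrightarrow> f x" by (rule isCont_tendsto_compose[OF ic s(2)])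
  have mem: "\<forall>n. f (s n) \<in> f ` C" using s(1) by blast
  have "f x \<in> closure (f ` C)" unfolding closure_sequential
    by (rule exI[of _ "\<lambda>n. f (s n)"]) (use lim mem in simp)
  moreover have "f x \<in> Lt" using h x(1) homeomorphism_image1 by blast
  ultimately show "y \<in> Lt \<inter> closure (f ` C)" using y by blast
qed

lemma homeo_closure:
  assumes h: "homeomorphism Lt Lt f f'" and C: "C \<subseteq> Lt"
  shows "Lt \<inter> closure (f ` C) = f ` (Lt \<inter> closure C)"
proof
  show "f ` (Lt \<inter> closure C) \<subseteq> Lt \<inter> closure (f ` C)" using homeo_closure_sub[OF h C] .
  have h': "homeomorphism Lt Lt f' f" using h homeomorphism_sym by blast
  have fC: "f ` C \<subseteq> Lt" using h C homeomorphism_image1 by blast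
  have ff: "f' ` f ` C = C"
  proof -
    have "(\<lambda>x. f' (f x)) ` C = (\<lambda>x. x) ` C"
      by (rule image_cong) (use h C homeomorphism_apply1 in blast)+
    then show ?thesis by (simp add: image_image)
  qed
  have "f' ` (Lt \<inter> closure (f ` C)) \<subseteq> Lt \<inter> closure C"
    using homeo_closure_sub[OF h' fC] ff by simp
  then have "f ` f' ` (Lt \<inter> closure (f ` C)) \<subseteq> f ` (Lt \<inter> closure C)" by blast
  moreover have "f ` f' ` (Lt \<inter> closure (f ` C)) = Lt \<inter> closure (f ` C)"
  proof -
    have "(\<lambda>x. f (f' x)) ` (Lt \<inter> closure (f ` C)) = (\<lambda>x. x) ` (Lt \<inter> closure (f ` C))"
      by (rule image_cong) (use h homeomorphism_apply2 in blast)+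
    then show ?thesis by (simp add: image_image)
  qed
  ultimately show "Lt \<inter> closure (f ` C) \<subseteq> f ` (Lt \<inter> closure C)" by simp
qed

lemma Collect_image: "{y \<in> h ` K. P y} = h ` {x \<in> K. P (h x)}"
  by auto

lemma homeo_components:
  assumes h: "homeomorphism Lt Lt f f'" and S: "S \<subseteq> Lt"
  shows "components (f ` S) = (\<lambda>C. f ` C) ` components S"
proof -
  have "components (f ` S) = (\<lambda>x. connected_component_set (f ` S) (f x)) ` S"
    unfolding components_def by (simp add: image_image)
  also have "\<dots> = (\<lambda>x. f ` connected_component_set S x) ` S"
    by (rule image_cong) (use homeo_cc[OF h S] S in blast)+
  also have "\<dots> = (\<lambda>C. f ` C) ` components S"
    unfolding components_def by (simp add: image_image)
  finally show ?thesis .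
qed

lemma homeo_collect:
  assumes h: "homeomorphism Lt Lt f f'" and PQ: "\<And>c. c \<in> Lt \<Longrightarrow> P (f c) = Q c"
  shows "{b \<in> Lt. P b} = f ` {c \<in> Lt. Q c}"
proof
  show "{b \<in> Lt. P b} \<subseteq> f ` {c \<in> Lt. Q c}"
  proof
    fix b assume b: "b \<in> {b \<in> Lt. P b}"
    have c: "f' b \<in> Lt" using h b homeomorphism_image2 by blast
    have fb: "f (f' b) = b" using h b homeomorphism_apply2 by blast
    have "Q (f' b)" using PQ[OF c] fb b by simp
    then show "b \<in> f ` {c \<in> Lt. Q c}" using c fb by (metis (mono_tags, lifting) image_eqI mem_Collect_eq)
  qed
  show "f ` {c \<in> Lt. Q c} \<subseteq> {b \<in> Lt. P b}"
    using PQ h homeomorphism_image1 by blast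
qed

lemma homeo_diff:
  assumes h: "homeomorphism Lt Lt f f'" and E: "E \<subseteq> Lt"
  shows "Lt - f ` E = f ` (Lt - E)"
proof -
  have "Lt - f ` E = f ` Lt - f ` E" using h by (simp add: homeomorphism_def)
  also have "\<dots> = f ` (Lt - E)" using inj_on_image_set_diff[OF homeo_inj[OF h] _ E] by simp
  finally show ?thesis .
qed

lemma homeo_image_eq:
  assumes h: "homeomorphism Lt Lt f f'" and A: "A \<subseteq> Lt" and B: "B \<subseteq> Lt"
  shows "f ` A = f ` B \<longleftrightarrow> A = B"
  using inj_on_image_eq_iff[OF homeo_inj[OF h] A B] .

lemma proj_Lset: "b \<in> Lt \<Longrightarrow> proj b \<in> Lset"
  by (cases b) (auto simp: Lt_iff Lset_def proj_def norm_mult)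

lemma proj_act_gen: "g \<in> Lt \<Longrightarrow> c \<in> Lt \<Longrightarrow> proj (act g c) = Mg g (proj c)"
  using proj_act by (cases g; cases c) auto

lemma form_act:
  assumes g: "g \<in> Gt" and x: "x \<in> Lt" and c: "c \<in> Lt"
  shows "form (proj (act g x)) (proj (act g c)) = form (proj x) (proj c)"
proof -
  have gL: "g \<in> Lt" using g Gt_sub_Lt by blast
  obtain zg ag rg where gg: "g = (zg,ag,rg)" by (cases g) auto
  show ?thesis using proj_act_gen[OF gL x] proj_act_gen[OF gL c] form_Mg g gg by simp
qed

lemma Eset: "Lt \<inter> proj -` Ebar y = {b \<in> Lt. form y (proj b) = -1}"
  using proj_Lset by (auto simp: Ebar_def)

lemma Iset: "Lt \<inter> proj -` Ibar y = {b \<in> Lt. form y (proj b) \<le> -1}"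
  using proj_Lset by (auto simp: Ibar_def)

lemma Eg_act:
  assumes g: "g \<in> Gt" and x: "x \<in> Lt"
  shows "Eg (act g x) = act g ` Eg x"
proof -
  have h: "homeomorphism Lt Lt (act g) (act (inv_t g))" using homeo_act g by blast
  have S: "Lt \<inter> proj -` Ebar (proj (act g x)) = act g ` (Lt \<inter> proj -` Ebar (proj x))"
    unfolding Eset by (rule homeo_collect[OF h]) (use form_act g x in simp)
  show ?thesis unfolding Eg_def S
    by (rule homeo_cc[OF h _ x]) blast
qed

lemma Ig_act:
  assumes g: "g \<in> Gt" and x: "x \<in> Lt"
  shows "Ig (act g x) = act g ` Ig x"
proof -
  have h: "homeomorphism Lt Lt (act g) (act (inv_t g))" using homeo_act g by blast
  have S: "Lt \<inter> proj -` Ibar (proj (act g x)) = act g ` (Lt \<inter> proj -` Ibar (proj x))"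
    unfolding Iset by (rule homeo_collect[OF h]) (use form_act g x in simp)
  show ?thesis unfolding Ig_def S
    by (rule homeo_cc[OF h _ x]) blast
qed

lemma Eg_sub: "Eg x \<subseteq> Lt"
  unfolding Eg_def using connected_component_subset by blast

lemma Ig_sub: "Ig x \<subseteq> Lt"
  unfolding Ig_def using connected_component_subset by blast

lemma Hg_act:
  assumes g: "g \<in> Gt" and x: "x \<in> Lt"
  shows "Hg (act g x) = act g ` Hg x"
proof -
  define f where "f = act g"
  have h: "homeomorphism Lt Lt f (act (inv_t g))" using homeo_act g f_def by blast
  define E where "E = Eg x"
  define I where "I = Ig x"
  have ES: "E \<subseteq> Lt" "I \<subseteq> Lt" using Eg_sub Ig_sub E_def I_def by auto
  have D: "Lt - Eg (f x) = f ` (Lt - E)"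
    using Eg_act[OF g x] homeo_diff[OF h ES(1)] f_def E_def by simp
  have If: "Ig (f x) = f ` I" using Ig_act[OF g x] f_def I_def by simp
  have cs: "\<And>C. C \<in> components (Lt - E) \<Longrightarrow> C \<subseteq> Lt"
    using in_components_subset by blast
  have "{C \<in> components (Lt - Eg (f x)). Lt \<inter> closure C \<noteq> Ig (f x)}
       = (\<lambda>C. f ` C) ` {C \<in> components (Lt - E). Lt \<inter> closure C \<noteq> I}"
  proof -
    have "components (Lt - Eg (f x)) = (\<lambda>C. f ` C) ` components (Lt - E)"
      unfolding D by (rule homeo_components[OF h]) blast
    moreover have eqv: "\<And>C. C \<in> components (Lt - E) \<Longrightarrow>
        (Lt \<inter> closure (f ` C) \<noteq> f ` I) = (Lt \<inter> closure C \<noteq> I)"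
    proof -
      fix C assume C: "C \<in> components (Lt - E)"
      have "Lt \<inter> closure (f ` C) = f ` (Lt \<inter> closure C)" using homeo_closure[OF h cs[OF C]] .
      moreover have "(f ` (Lt \<inter> closure C) = f ` I) = (Lt \<inter> closure C = I)"
        by (rule homeo_image_eq[OF h]) (use ES in auto)
      ultimately show "(Lt \<inter> closure (f ` C) \<noteq> f ` I) = (Lt \<inter> closure C \<noteq> I)" by simp
    qed
    ultimately have "{C \<in> components (Lt - Eg (f x)). Lt \<inter> closure C \<noteq> Ig (f x)} =
       {C \<in> (\<lambda>C. f ` C) ` components (Lt - E). Lt \<inter> closure C \<noteq> f ` I}" using If by simp
    also have "\<dots> = (\<lambda>C. f ` C) ` {C \<in> components (Lt - E). Lt \<inter> closure (f ` C) \<noteq> f ` I}"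
      by (rule Collect_image)
    also have "\<dots> = (\<lambda>C. f ` C) ` {C \<in> components (Lt - E). Lt \<inter> closure C \<noteq> I}"
    proof -
      have "{C \<in> components (Lt - E). Lt \<inter> closure (f ` C) \<noteq> f ` I} = {C \<in> components (Lt - E). Lt \<inter> closure C \<noteq> I}"
      proof (rule Collect_cong)
        fix C show "(C \<in> components (Lt - E) \<and> Lt \<inter> closure (f ` C) \<noteq> f ` I) = (C \<in> components (Lt - E) \<and> Lt \<inter> closure C \<noteq> I)"
          using eqv[of C] by blast
      qed
      then show ?thesis by simp
    qed
    finally show ?thesis .
  qed
  then have U: "\<Union>{C \<in> components (Lt - Eg (f x)). Lt \<inter> closure C \<noteq> Ig (f x)}
      = f ` \<Union>{C \<in> components (Lt - E). Lt \<inter> closure C \<noteq> I}"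
    by (simp only: image_Union)
  have US: "\<Union>{C \<in> components (Lt - E). Lt \<inter> closure C \<noteq> I} \<subseteq> Lt" using cs by blast
  show ?thesis
    unfolding Hg_def U homeo_closure[OF h US] f_def[symmetric] E_def[symmetric] I_def[symmetric] ..
qed

definition phi :: "complex \<times> real \<times> real \<Rightarrow> pt" where
  "phi q = (case q of (\<zeta>, a, s) \<Rightarrow> (\<zeta> * of_real (s / cos a), a, s / cos a))"

lemma phi_image:
  assumes Sv: "Sv \<subseteq> {0<..}"
  shows "phi ` (ball 0 1 \<times> {-pi/2<..<pi/2} \<times> Sv) = {(z,a,r). (z,a,r) \<in> Lt \<and> \<bar>a\<bar> < pi/2 \<and> r * cos a \<in> Sv}"
proof
  show "phi ` (ball 0 1 \<times> {-pi/2<..<pi/2} \<times> Sv) \<subseteq> {(z,a,r). (z,a,r) \<in> Lt \<and> \<bar>a\<bar> < pi/2 \<and> r * cos a \<in> Sv}"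
  proof
    fix p assume "p \<in> phi ` (ball 0 1 \<times> {-pi/2<..<pi/2} \<times> Sv)"
    then obtain \<zeta> a s where q: "\<zeta> \<in> ball 0 1" "a \<in> {-pi/2<..<pi/2}" "s \<in> Sv" and p: "p = phi (\<zeta>, a, s)" by auto
    have c: "cos a > 0" using q(2) by (auto intro: cos_gt_zero_pi)
    have s: "s > 0" using q(3) Sv by auto
    have r: "s / cos a > 0" using c s by simp
    have "cmod (\<zeta> * of_real (s / cos a)) = cmod \<zeta> * (s / cos a)"
      by (simp only: norm_mult norm_of_real abs_of_pos[OF r])
    also have "\<dots> < 1 * (s / cos a)"
      using q(1) r by (intro mult_strict_right_mono) auto
    finally have "cmod (\<zeta> * of_real (s / cos a)) < s / cos a" by simp
    moreover have "s / cos a * cos a = s" using c by simp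
    ultimately show "p \<in> {(z,a,r). (z,a,r) \<in> Lt \<and> \<bar>a\<bar> < pi/2 \<and> r * cos a \<in> Sv}"
      using p q r by (auto simp: phi_def Lt_iff abs_less_iff)
  qed
  show "{(z,a,r). (z,a,r) \<in> Lt \<and> \<bar>a\<bar> < pi/2 \<and> r * cos a \<in> Sv} \<subseteq> phi ` (ball 0 1 \<times> {-pi/2<..<pi/2} \<times> Sv)"
  proof
    fix p assume "p \<in> {(z,a,r). (z,a,r) \<in> Lt \<and> \<bar>a\<bar> < pi/2 \<and> r * cos a \<in> Sv}"
    then obtain z a r where p: "p = (z,a,r)" and L: "(z,a,r) \<in> Lt" and a: "\<bar>a\<bar> < pi/2" and s: "r * cos a \<in> Sv"
      by auto
    have c: "cos a > 0" using a by (auto intro: cos_gt_zero_pi)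
    have rz: "0 < r" "cmod z < r" using L by (auto simp: Lt_iff)
    have "phi (z / of_real r, a, r * cos a) = (z,a,r)"
      using c rz by (simp add: phi_def)
    moreover have "(z / of_real r, a, r * cos a) \<in> ball 0 1 \<times> {-pi/2<..<pi/2} \<times> Sv"
      using rz a s by (auto simp: norm_divide abs_less_iff)
    ultimately show "p \<in> phi ` (ball 0 1 \<times> {-pi/2<..<pi/2} \<times> Sv)" using p by (metis image_eqI)
  qed
qed

lemma phi_conn:
  assumes "convex Sv"
  shows "connected (phi ` (ball 0 1 \<times> {-pi/2<..<pi/2} \<times> Sv))"
proof (rule connected_continuous_image)
  show "connected (ball (0::complex) 1 \<times> {-pi/2<..<pi/2} \<times> Sv)"
    by (intro convex_connected convex_Times convex_ball assms) (simp add: convex_real_interval)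
  have "\<And>q. q \<in> ball (0::complex) 1 \<times> {-pi/2<..<pi/2} \<times> Sv \<Longrightarrow> cos (fst (snd q)) \<noteq> 0"
  proof -
    fix q :: "complex \<times> real \<times> real" assume "q \<in> ball 0 1 \<times> {-pi/2<..<pi/2} \<times> Sv"
    then have "-(pi/2) < fst (snd q)" "fst (snd q) < pi/2" by auto
    then have "cos (fst (snd q)) > 0" by (rule cos_gt_zero_pi)
    then show "cos (fst (snd q)) \<noteq> 0" by simp
  qed
  then show "continuous_on (ball 0 1 \<times> {-pi/2<..<pi/2} \<times> Sv) phi"
    unfolding phi_def case_prod_beta by (intro continuous_intros) auto
qed

definition E0 :: "pt set" where "E0 = {(z,a,r). (z,a,r) \<in> Lt \<and> \<bar>a\<bar> < pi/2 \<and> r * cos a = 1}"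
definition I0 :: "pt set" where "I0 = {(z,a,r). (z,a,r) \<in> Lt \<and> \<bar>a\<bar> < pi/2 \<and> r * cos a \<ge> 1}"
definition A0 :: "pt set" where "A0 = {(z,a,r). (z,a,r) \<in> Lt \<and> \<bar>a\<bar> < pi/2 \<and> r * cos a > 1}"

lemma conn_E0: "connected E0"
proof -
  have "E0 = {(z,a,r). (z,a,r) \<in> Lt \<and> \<bar>a\<bar> < pi/2 \<and> r * cos a \<in> {1}}" by (auto simp: E0_def)
  then show ?thesis using phi_image[of "{1}"] phi_conn[of "{1}"] by simp
qed

lemma conn_I0: "connected I0"
proof -
  have "I0 = {(z,a,r). (z,a,r) \<in> Lt \<and> \<bar>a\<bar> < pi/2 \<and> r * cos a \<in> {1..}}" by (auto simp: I0_def)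
  moreover have "convex {1::real..}" by (simp add: convex_real_interval)
  moreover have "{1::real..} \<subseteq> {0<..}" by auto
  ultimately show ?thesis using phi_image[of "{1..}"] phi_conn[of "{1..}"] by simp
qed

lemma conn_A0: "connected A0"
proof -
  have "A0 = {(z,a,r). (z,a,r) \<in> Lt \<and> \<bar>a\<bar> < pi/2 \<and> r * cos a \<in> {1<..}}" by (auto simp: A0_def)
  moreover have "convex {1::real<..}" by (simp add: convex_real_interval)
  moreover have "{1::real<..} \<subseteq> {0<..}" by auto
  ultimately show ?thesis using phi_image[of "{1<..}"] phi_conn[of "{1<..}"] by simp
qed

lemma cc_clopen:
  assumes TS: "T \<subseteq> S" and cT: "connected T" and xT: "x \<in> T" and o1: "open U1" and o2: "open U2"
    and SU: "S \<subseteq> U1 \<union> U2" and D: "U1 \<inter> U2 = {}" and SUT: "S \<inter> U1 \<subseteq> T" and x1: "x \<in> U1"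
  shows "connected_component_set S x = T"
proof
  show "T \<subseteq> connected_component_set S x" using connected_component_maximal[OF xT cT TS] .
  define C where "C = connected_component_set S x"
  have cC: "connected C" unfolding C_def by (rule connected_connected_component)
  have CS: "C \<subseteq> S" unfolding C_def by (rule connected_component_subset)
  have xC: "x \<in> C" unfolding C_def using xT TS by auto
  have "U1 \<inter> C = {} \<or> U2 \<inter> C = {}"
    by (rule connectedD[OF cC o1 o2]) (use D SU CS in auto)
  then have "U2 \<inter> C = {}" using xC x1 by blast
  then have "C \<subseteq> S \<inter> U1" using CS SU by blast
  then show "connected_component_set S x \<subseteq> T" using SUT C_def by blast
qed

lemma e_Gt: "e_t \<in> Gt" by (simp add: e_t_def Gt_iff)
lemma e_Lt: "e_t \<in> Lt" by (simp add: e_t_def Lt_iff)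

lemma form_e: "form (proj e_t) (proj (z,a,r)) = - (r * cos a)"
  by (simp add: form_def proj_def e_t_def)

lemma open_ang1: "open {p::pt. \<bar>fst (snd p)\<bar> < pi/2}"
  by (intro open_Collect_less continuous_intros)
lemma open_ang2: "open {p::pt. pi/2 < \<bar>fst (snd p)\<bar>}"
  by (intro open_Collect_less continuous_intros)

lemma cos_pi2_abs: "\<bar>a\<bar> = pi/2 \<Longrightarrow> cos a = 0"
proof -
  assume "\<bar>a\<bar> = pi/2"
  then have "a = pi/2 \<or> a = -(pi/2)" by linarith
  then show ?thesis by (metis cos_pi_half cos_minus)
qed

lemma Ee: "Eg e_t = E0"
proof -
  have S: "Lt \<inter> proj -` Ebar (proj e_t) = {(z,a,r). (z,a,r) \<in> Lt \<and> r * cos a = 1}"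
    unfolding Eset by (auto simp: form_e)
  show ?thesis unfolding Eg_def S
  proof (rule cc_clopen[OF _ conn_E0 _ open_ang1 open_ang2])
    show "E0 \<subseteq> {(z,a,r). (z,a,r) \<in> Lt \<and> r * cos a = 1}" by (auto simp: E0_def)
    show "e_t \<in> E0" by (simp add: E0_def e_t_def Lt_iff)
    show "{(z,a,r). (z,a,r) \<in> Lt \<and> r * cos a = 1} \<subseteq> {p. \<bar>fst (snd p)\<bar> < pi/2} \<union> {p. pi/2 < \<bar>fst (snd p)\<bar>}"
    proof
      fix p assume p: "p \<in> {(z,a,r). (z,a,r) \<in> Lt \<and> r * cos a = 1}"
      obtain z a r where pp: "p = (z,a,r)" by (cases p) auto
      have "\<bar>a\<bar> \<noteq> pi/2"
      proof
        assume "\<bar>a\<bar> = pi/2"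
        then have "cos a = 0" by (rule cos_pi2_abs)
        then show False using p pp by simp
      qed
      then show "p \<in> {p. \<bar>fst (snd p)\<bar> < pi/2} \<union> {p. pi/2 < \<bar>fst (snd p)\<bar>}"
        using pp by auto
    qed
    show "{p::pt. \<bar>fst (snd p)\<bar> < pi/2} \<inter> {p. pi/2 < \<bar>fst (snd p)\<bar>} = {}" by auto
    show "{(z,a,r). (z,a,r) \<in> Lt \<and> r * cos a = 1} \<inter> {p. \<bar>fst (snd p)\<bar> < pi/2} \<subseteq> E0"
      by (auto simp: E0_def)
    show "e_t \<in> {p. \<bar>fst (snd p)\<bar> < pi/2}" by (simp add: e_t_def)
  qed
qed

lemma Ie: "Ig e_t = I0"
proof -
  have S: "Lt \<inter> proj -` Ibar (proj e_t) = {(z,a,r). (z,a,r) \<in> Lt \<and> r * cos a \<ge> 1}"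
    unfolding Iset by (auto simp: form_e)
  show ?thesis unfolding Ig_def S
  proof (rule cc_clopen[OF _ conn_I0 _ open_ang1 open_ang2])
    show "I0 \<subseteq> {(z,a,r). (z,a,r) \<in> Lt \<and> r * cos a \<ge> 1}" by (auto simp: I0_def)
    show "e_t \<in> I0" by (simp add: I0_def e_t_def Lt_iff)
    show "{(z,a,r). (z,a,r) \<in> Lt \<and> r * cos a \<ge> 1} \<subseteq> {p. \<bar>fst (snd p)\<bar> < pi/2} \<union> {p. pi/2 < \<bar>fst (snd p)\<bar>}"
    proof
      fix p assume p: "p \<in> {(z,a,r). (z,a,r) \<in> Lt \<and> r * cos a \<ge> 1}"
      obtain z a r where pp: "p = (z,a,r)" by (cases p) auto
      have "\<bar>a\<bar> \<noteq> pi/2"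
      proof
        assume "\<bar>a\<bar> = pi/2"
        then have "cos a = 0" by (rule cos_pi2_abs)
        then show False using p pp by simp
      qed
      then show "p \<in> {p. \<bar>fst (snd p)\<bar> < pi/2} \<union> {p. pi/2 < \<bar>fst (snd p)\<bar>}"
        using pp by auto
    qed
    show "{p::pt. \<bar>fst (snd p)\<bar> < pi/2} \<inter> {p. pi/2 < \<bar>fst (snd p)\<bar>} = {}" by auto
    show "{(z,a,r). (z,a,r) \<in> Lt \<and> r * cos a \<ge> 1} \<inter> {p. \<bar>fst (snd p)\<bar> < pi/2} \<subseteq> I0"
      by (auto simp: I0_def)
    show "e_t \<in> {p. \<bar>fst (snd p)\<bar> < pi/2}" by (simp add: e_t_def)
  qed
qed

definition F0 :: "pt set" where "F0 = {p. \<bar>fst (snd p)\<bar> \<le> pi/2 \<and> 1 \<le> snd (snd p) * cos (fst (snd p))}"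

lemma closed_F0: "closed F0"
  unfolding F0_def by (intro closed_Collect_conj closed_Collect_le continuous_intros)

lemma open_A0: "open A0"
proof -
  have eq: "A0 = Lt \<inter> {p. \<bar>fst (snd p)\<bar> < pi/2} \<inter> {p. 1 < snd (snd p) * cos (fst (snd p))}"
  proof (rule set_eqI)
    fix p :: pt obtain z a r where "p = (z,a,r)" by (cases p) auto
    then show "p \<in> A0 \<longleftrightarrow> p \<in> Lt \<inter> {p. \<bar>fst (snd p)\<bar> < pi/2} \<inter> {p. 1 < snd (snd p) * cos (fst (snd p))}"
      by (simp add: A0_def)
  qed
  have "open {p::pt. 1 < snd (snd p) * cos (fst (snd p))}"
    by (intro open_Collect_less continuous_intros)
  then show ?thesis unfolding eq by (intro open_Int open_Lt open_ang1)
qed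

lemma A0_F0: "A0 \<subseteq> F0" by (auto simp: A0_def F0_def)
lemma LtF0: "Lt \<inter> F0 \<subseteq> I0"
proof
  fix p assume p: "p \<in> Lt \<inter> F0"
  obtain z a r where pp: "p = (z,a,r)" by (cases p) auto
  have "\<bar>a\<bar> \<noteq> pi/2" using p pp cos_pi2_abs by (fastforce simp: F0_def)
  then show "p \<in> I0" using p pp by (auto simp: F0_def I0_def)
qed

lemma A0_comp: "A0 \<in> components (Lt - E0)"
proof -
  have x: "(0, 0, 2) \<in> A0" by (simp add: A0_def Lt_iff)
  have "connected_component_set (Lt - E0) (0,0,2) = A0"
  proof (rule cc_clopen[OF _ conn_A0 x open_A0])
    show "A0 \<subseteq> Lt - E0" by (auto simp: A0_def E0_def)
    show "open (- F0)" using closed_F0 by (simp add: open_Compl)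
    show "Lt - E0 \<subseteq> A0 \<union> - F0"
    proof
      fix p assume p: "p \<in> Lt - E0"
      show "p \<in> A0 \<union> - F0"
      proof (cases "p \<in> F0")
        case True
        then have "p \<in> I0" using p LtF0 by blast
        then show ?thesis using p by (auto simp: I0_def A0_def E0_def)
      qed simp
    qed
    show "A0 \<inter> - F0 = {}" using A0_F0 by blast
    show "(Lt - E0) \<inter> A0 \<subseteq> A0" by blast
    show "(0,0,2) \<in> A0" using x .
  qed
  moreover have "(0,0,2) \<in> Lt - E0" using x by (auto simp: A0_def E0_def)
  ultimately show ?thesis unfolding components_iff by metis
qed

lemma closure_A0: "Lt \<inter> closure A0 = I0"
proof
  have "closure A0 \<subseteq> F0" using closure_minimal[OF A0_F0 closed_F0] .
  then show "Lt \<inter> closure A0 \<subseteq> I0" using LtF0 by blast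
  show "I0 \<subseteq> Lt \<inter> closure A0"
  proof
    fix p assume p: "p \<in> I0"
    obtain z a r where pp: "p = (z,a,r)" by (cases p) auto
    have h: "(z,a,r) \<in> Lt" "\<bar>a\<bar> < pi/2" "r * cos a \<ge> 1" using p pp by (auto simp: I0_def)
    have c: "cos a > 0" using h(2) by (auto intro: cos_gt_zero_pi)
    define s where "s = (\<lambda>n::nat. (z, a, r + 1 / real (Suc n)))"
    have "\<forall>n. s n \<in> A0"
    proof
      fix n
      have "0 < 1 / real (Suc n)" by simp
      then have "r * cos a < (r + 1 / real (Suc n)) * cos a" using c by (simp add: algebra_simps)
      moreover have "0 < r + 1 / real (Suc n)" "cmod z < r + 1 / real (Suc n)"
        using h(1) \<open>0 < 1 / real (Suc n)\<close> unfolding Lt_iff by linarith+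
      ultimately show "s n \<in> A0" using h by (simp add: s_def A0_def Lt_iff)
    qed
    moreover have "s \<longlonglongrightarrow> (z,a,r)"
    proof -
      have "(\<lambda>n. r + 1 / real (Suc n)) \<longlonglongrightarrow> r + 0"
        by (intro tendsto_add tendsto_const) (rule LIMSEQ_Suc[OF lim_1_over_n])
      then show ?thesis unfolding s_def by (intro tendsto_Pair tendsto_const) simp
    qed
    ultimately have "(z,a,r) \<in> closure A0" unfolding closure_sequential by (intro exI[of _ s]) simp
    then show "p \<in> Lt \<inter> closure A0" using pp h by blast
  qed
qed

lemma He_sub: "Hg e_t \<subseteq> Lt - A0"
proof -
  have "\<Union>{C \<in> components (Lt - Eg e_t). Lt \<inter> closure C \<noteq> Ig e_t} \<subseteq> - A0"
  proof
    fix p assume "p \<in> \<Union>{C \<in> components (Lt - Eg e_t). Lt \<inter> closure C \<noteq> Ig e_t}"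
    then obtain C where C: "C \<in> components (Lt - E0)" "Lt \<inter> closure C \<noteq> I0" "p \<in> C"
      unfolding Ee Ie by blast
    have "C \<noteq> A0" using C(2) closure_A0 by blast
    then have "C \<inter> A0 = {}" using components_eq[OF C(1) A0_comp] by blast
    then show "p \<in> - A0" using C(3) by blast
  qed
  then have "closure (\<Union>{C \<in> components (Lt - Eg e_t). Lt \<inter> closure C \<noteq> Ig e_t}) \<subseteq> - A0"
    by (rule closure_minimal[OF _ closed_Compl[OF open_A0]])
  then show ?thesis unfolding Hg_def by blast
qed

lemma rot_Gt: "(0, th, 1) \<in> Gt" by (simp add: Gt_iff)

lemma act_rot: "0 < r \<Longrightarrow> act (0, th, 1) (z, al, r) = (cis (- th) * z, th + al, r)"
  by (simp add: act_rot_left norm_mult)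

lemma H_rot:
  assumes c: "c \<in> Hg (0, th, 1)"
  shows "c \<in> Lt \<and> \<not> (\<bar>fst (snd c) - th\<bar> < pi/2 \<and> snd (snd c) * cos (fst (snd c) - th) > 1)"
proof -
  have "Hg (0, th, 1) = Hg (act (0, th, 1) e_t)" using act_e[OF rot_Gt] by simp
  also have "\<dots> = act (0, th, 1) ` Hg e_t" using Hg_act[OF rot_Gt e_Lt] .
  finally have "c \<in> act (0, th, 1) ` (Lt - A0)" using c He_sub by blast
  then obtain z al r where d: "(z,al,r) \<in> Lt - A0" and cc: "c = act (0,th,1) (z,al,r)" by auto
  have r: "0 < r" using d by (simp add: Lt_iff)
  have c2: "c = (cis (- th) * z, th + al, r)" using cc act_rot[OF r] by simp
  have "c \<in> Lt" using cc act_Lt[OF rot_Gt] d by blast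
  moreover have "\<not> (\<bar>al\<bar> < pi/2 \<and> r * cos al > 1)" using d by (auto simp: A0_def)
  ultimately show ?thesis using c2 by simp
qed

lemma key_angle:
  assumes c: "(z,a,r) \<in> E0" and th: "0 < th" "th < pi"
    and h1: "\<not> (\<bar>a - th\<bar> < pi/2 \<and> r * cos (a - th) > 1)"
    and h2: "\<not> (\<bar>a - (-th)\<bar> < pi/2 \<and> r * cos (a - (-th)) > 1)"
  shows "\<bar>a\<bar> \<le> th / 2"
proof (rule ccontr)
  assume na: "\<not> \<bar>a\<bar> \<le> th / 2"
  have e: "\<bar>a\<bar> < pi/2" "r * cos a = 1" "0 < r" using c by (auto simp: E0_def Lt_iff)
  show False
  proof (cases "a \<ge> 0")
    case True
    then have a: "a > th/2" using na by simp
    have lt: "\<bar>a - th\<bar> < \<bar>a\<bar>" using a th True by linarith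
    have "cos \<bar>a\<bar> < cos \<bar>a - th\<bar>"
      by (rule cos_monotone_0_pi) (use lt e in auto)
    then have "cos a < cos (a - th)" by simp
    then have "r * cos a < r * cos (a - th)" using e(3) by simp
    then show False using h1 lt e by linarith
  next
    case False
    then have a: "a < - th/2" using na by simp
    have lt: "\<bar>a - (-th)\<bar> < \<bar>a\<bar>" using a th False by linarith
    have "cos \<bar>a\<bar> < cos \<bar>a - (-th)\<bar>"
      by (rule cos_monotone_0_pi) (use lt e in auto)
    then have "cos a < cos (a - (-th))" by simp
    then have "r * cos a < r * cos (a - (-th))" using e(3) by simp
    then show False using h2 lt e by linarith
  qed
qed

lemma mob_act_rot:
  assumes g: "(zg,ag,rg) \<in> Gt"
  shows "mob (act (zg,ag,rg) (0, th, 1)) 0 = mob (zg,ag,rg) 0"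
proof -
  have r: "0 < rg" using g by (simp add: Gt_iff)
  have "mob (zg * cis th, ag + th, rg) 0 = mob (zg,ag,rg) 0"
    using r by (simp add: mob_def Let_def cis_cnj field_simps cis_mult[symmetric])
  then show ?thesis using act_rot_right[OF g] by simp
qed

lemma sub_Gt: "subgroup_Gt \<Gamma> \<Longrightarrow> \<Gamma> \<subseteq> Gt" by (simp add: subgroup_Gt_def)
lemma sub_act: "subgroup_Gt \<Gamma> \<Longrightarrow> g \<in> \<Gamma> \<Longrightarrow> h \<in> \<Gamma> \<Longrightarrow> act g h \<in> \<Gamma>" by (simp add: subgroup_Gt_def)
lemma sub_e: "subgroup_Gt \<Gamma> \<Longrightarrow> e_t \<in> \<Gamma>" by (simp add: subgroup_Gt_def)

lemma inv_in:
  assumes sub: "subgroup_Gt \<Gamma>" and g: "g \<in> \<Gamma>"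
  shows "inv_t g \<in> \<Gamma>"
proof -
  obtain h where h: "h \<in> \<Gamma>" "act g h = e_t" using sub g unfolding subgroup_Gt_def by blast
  have gG: "g \<in> Gt" and hG: "h \<in> Gt" using sub g h sub_Gt by auto
  have hL: "h \<in> Lt" using hG Gt_sub_Lt by blast
  have "h = act (inv_t g) (act g h)" using act_inv2[OF gG hL] by simp
  also have "\<dots> = inv_t g" using h(2) act_e[OF inv_Gt[OF gG]] by simp
  finally show ?thesis using h(1) by simp
qed

lemma closed_Gt: "closed Gt"
proof -
  have eq: "Gt = {p. 1 \<le> snd (snd p)} \<inter> {p. (cmod (fst p))^2 = (snd (snd p))^2 - 1}"
  proof (rule set_eqI)
    fix p :: pt obtain z a r where "p = (z,a,r)" by (cases p) auto
    then show "p \<in> Gt \<longleftrightarrow> p \<in> {p. 1 \<le> snd (snd p)} \<inter> {p. (cmod (fst p))^2 = (snd (snd p))^2 - 1}"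
      by (simp add: Gt_iff2)
  qed
  have "closed {p::pt. 1 \<le> snd (snd p)}" by (intro closed_Collect_le continuous_intros)
  moreover have "closed {p::pt. (cmod (fst p))^2 = (snd (snd p))^2 - 1}" by (intro closed_Collect_eq continuous_intros)
  ultimately show ?thesis unfolding eq by (rule closed_Int)
qed

lemma inv_t_alt: "inv_t g = (- fst g, - fst (snd g), snd (snd g))"
  by (cases g) (simp add: inv_t_def)

lemma fin_bounded:
  assumes sub: "subgroup_Gt \<Gamma>" and disc: "discrete \<Gamma>" and K: "bounded K"
  shows "finite (\<Gamma> \<inter> K)"
proof (rule ccontr)
  assume inf: "infinite (\<Gamma> \<inter> K)"
  obtain c R where KR: "K \<subseteq> cball c R" using K bounded_subset_cball by blast
  obtain x where x: "x islimpt (\<Gamma> \<inter> K)"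
    using Heine_Borel_imp_Bolzano_Weierstrass[OF compact_cball inf] KR by blast
  have "x islimpt Gt" using x sub_Gt[OF sub] by (meson inf_le1 islimpt_subset order_trans)
  then have xG: "x \<in> Gt" using closed_Gt closed_limpt by blast
  have xL: "x \<in> Lt" using xG Gt_sub_Lt by blast
  have ixL: "inv_t x \<in> Lt" using inv_Gt[OF xG] Gt_sub_Lt by blast
  define F where "F = (\<lambda>p::pt\<times>pt. act (inv_t (fst p)) (snd p))"
  have Fx: "F (x,x) = e_t"
    using act_inv2[OF xG e_Lt] act_e[OF xG] by (simp add: F_def)
  have cF: "isCont F (x,x)"
  proof -
    have c1: "isCont (\<lambda>p::pt\<times>pt. (inv_t (fst p), snd p)) (x,x)"
      unfolding inv_t_alt by (intro continuous_intros)
    have "continuous_on (Lt \<times> Lt) (\<lambda>p. act (fst p) (snd p))" by (rule cont_act2)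
    then have c2: "isCont (\<lambda>p. act (fst p) (snd p)) (inv_t x, x)"
      using open_Times[OF open_Lt open_Lt] ixL xL continuous_on_eq_continuous_at by blast
    have "isCont ((\<lambda>p. act (fst p) (snd p)) \<circ> (\<lambda>p::pt\<times>pt. (inv_t (fst p), snd p))) (x,x)"
      by (rule continuous_at_compose[OF c1]) (use c2 in simp)
    then show ?thesis by (simp add: F_def o_def)
  qed
  obtain \<epsilon> where eps: "\<epsilon> > 0" "\<forall>y\<in>\<Gamma>. dist e_t y < \<epsilon> \<longrightarrow> y = e_t"
    using discreteD[OF disc sub_e[OF sub]] isolated_in_dist_Ex_iff by blast
  obtain \<delta> where del: "\<delta> > 0" "\<forall>p. dist p (x,x) < \<delta> \<longrightarrow> dist (F p) (F (x,x)) < \<epsilon>"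
    using cF eps(1) unfolding continuous_at_eps_delta by blast
  obtain g1 where g1: "g1 \<in> \<Gamma> \<inter> K" "g1 \<noteq> x" "dist g1 x < \<delta>/2"
    using x del(1) unfolding islimpt_approachable by (meson half_gt_zero)
  have d1: "dist g1 x > 0" using g1(2) by simp
  obtain g2 where g2: "g2 \<in> \<Gamma> \<inter> K" "g2 \<noteq> x" "dist g2 x < min (\<delta>/2) (dist g1 x)"
    using x del(1) d1 unfolding islimpt_approachable by (metis half_gt_zero min_less_iff_conj)
  have ne: "g1 \<noteq> g2" using g2(3) by auto
  have "dist (g1,g2) (x,x) \<le> dist (g1,g2) (x,g2) + dist (x,g2) (x,x)" by (rule dist_triangle)
  also have "\<dots> = dist g1 x + dist g2 x" by (simp add: dist_Pair_Pair)
  also have "\<dots> < \<delta>" using g1(3) g2(3) by simp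
  finally have "dist (F (g1,g2)) e_t < \<epsilon>" using del(2) Fx by metis
  moreover have "F (g1,g2) \<in> \<Gamma>" using sub_act[OF sub inv_in[OF sub] ] g1 g2 by (simp add: F_def)
  ultimately have Fe: "F (g1,g2) = e_t" using eps(2) by (simp add: dist_commute)
  have g1G: "g1 \<in> Gt" and g2G: "g2 \<in> Gt" using g1 g2 sub_Gt[OF sub] by auto
  have g2L: "g2 \<in> Lt" using g2G Gt_sub_Lt by blast
  have "g2 = act g1 (act (inv_t g1) g2)" using act_inv[OF g1G g2L] by simp
  also have "\<dots> = g1" using Fe act_e[OF g1G] by (simp add: F_def)
  finally show False using ne by simp
qed

lemma act_rr: "act (0, b, 1) (0, c, 1) = (0, b + c, 1)"
  using act_rot[of 1 b 0 c] by simp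

lemma mob_rot: "mob (0, b, 1) \<zeta> = cis (- 2 * b) * \<zeta>"
proof -
  have "mob (0, b, 1) \<zeta> = cis (- b) * \<zeta> / cis b"
    by (simp add: mob_def Let_def cis_cnj)
  also have "\<dots> = cis (- 2 * b) * \<zeta>"
    by (simp add: cis_divide[symmetric] divide_simps) (simp add: cis_mult)
  finally show ?thesis .
qed

lemma fix0:
  assumes g: "g \<in> Gt" and m: "mob g 0 = 0"
  shows "\<exists>b. g = (0, b, 1)"
proof -
  obtain z a r where gg: "g = (z,a,r)" by (cases g) auto
  have r: "1 \<le> r" "(cmod z)^2 = r^2 - 1" using g gg by (auto simp: Gt_iff2)
  have "cnj (of_real r * cis (- a)) \<noteq> 0" using r by simp
  then have "z = 0" using m gg by (simp add: mob_def Let_def)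
  then have "r^2 = 1" using r by simp
  then have "r = 1" using r(1) by (simp add: power2_eq_1_iff)
  then show ?thesis using gg \<open>z = 0\<close> by blast
qed

definition fb :: "real \<Rightarrow> complex \<Rightarrow> complex" where
  "fb b = (\<lambda>\<zeta>. if cmod \<zeta> < 1 then mob (0, b, 1) \<zeta> else 0)"

lemma fb_per: "fb (b + of_int m * c) = fb b" if "c = of_nat k * pi" for m :: int
proof -
  have "cis (- 2 * (b + of_int m * c)) = cis (- 2 * b) * cis (2 * pi * of_int (- m * int k))"
    using that by (simp add: cis_mult algebra_simps)
  also have "cis (2 * pi * of_int (- m * int k)) = 1"
    by (rule cis_multiple_2pi) simp
  finally have h: "cis (- 2 * (b + of_int m * c)) = cis (- 2 * b)" by simp
  show ?thesis unfolding fb_def mob_rot h ..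
qed

lemma rot_exists:
  assumes sub: "subgroup_Gt \<Gamma>" and lev: "has_level \<Gamma> k"
    and fin: "finite (isotropy_bar \<Gamma> 0)" and pk: "card (isotropy_bar \<Gamma> 0) > k"
  shows "\<exists>th. 0 < th \<and> th < pi \<and> (0, th, 1) \<in> \<Gamma>"
proof (rule ccontr)
  assume no: "\<not> (\<exists>th. 0 < th \<and> th < pi \<and> (0, th, 1) \<in> \<Gamma>)"
  define B where "B = {b. (0, b, 1) \<in> \<Gamma>}"
  have add: "b + c \<in> B" if "b \<in> B" "c \<in> B" for b c
  proof -
    have "act (0,b,1) (0,c,1) \<in> \<Gamma>" using sub_act[OF sub] that unfolding B_def by simp
    then show ?thesis using act_rr unfolding B_def by simp
  qed
  have neg: "- b \<in> B" if "b \<in> B" for b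
  proof -
    have "inv_t (0, b, 1) \<in> \<Gamma>" using inv_in[OF sub] that by (simp add: B_def)
    then show ?thesis by (simp add: B_def inv_t_def)
  qed
  have k0: "k > 0" using lev by (simp add: has_level_def)
  have kB: "real k * pi \<in> B"
  proof -
    have "(0, of_int (int k * 1) * pi, 1) \<in> {(0, of_int (int k * n) * pi, 1) | n. True}" by blast
    then have "(0, of_int (int k * 1) * pi, 1) \<in> \<Gamma> \<inter> Zc" using lev unfolding has_level_def by simp
    then show ?thesis by (simp add: B_def)
  qed
  have zB: "0 \<in> B" using sub_e[OF sub] by (simp add: B_def e_t_def)
  have natB: "real n * (real k * pi) \<in> B" for n :: nat
  proof (induction n)
    case 0 then show ?case using zB by simp
  next
    case (Suc n) then show ?case using add[OF Suc kB] by (simp add: algebra_simps)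
  qed
  have intB: "b + of_int m * (real k * pi) \<in> B" if "b \<in> B" for b m
  proof (cases "m \<ge> 0")
    case True
    then have e: "real (nat m) = of_int m" by simp
    show ?thesis using add[OF that natB[of "nat m"]] unfolding e .
  next
    case False
    then have e: "real (nat (- m)) = - of_int m" by simp
    show ?thesis using add[OF that neg[OF natB[of "nat (-m)"]]] unfolding e by simp
  qed
  have diff0: "b = c" if "b \<in> B" "c \<in> B" "\<bar>b - c\<bar> < pi" for b c
  proof (rule ccontr)
    assume "b \<noteq> c"
    show False
    proof (cases "b - c > 0")
      case True
      have "b - c \<in> B" using add[OF that(1) neg[OF that(2)]] by simp
      then have "(0, b - c, 1) \<in> \<Gamma>" by (simp add: B_def)
      moreover have "b - c < pi" using that(3) by linarith
      ultimately show False using no True by blast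
    next
      case False
      then have "c - b > 0" using \<open>b \<noteq> c\<close> by simp
      have "c - b \<in> B" using add[OF that(2) neg[OF that(1)]] by simp
      then have "(0, c - b, 1) \<in> \<Gamma>" by (simp add: B_def)
      moreover have "c - b < pi" using that(3) by linarith
      ultimately show False using no \<open>c - b > 0\<close> by blast
    qed
  qed
  have rep: "\<exists>b. b \<in> B \<and> 0 \<le> b \<and> b < real k * pi \<and> f = fb b" if fi: "f \<in> isotropy_bar \<Gamma> 0" for f
  proof -
    obtain g where g: "g \<in> \<Gamma>" "mob g 0 = 0" "f = (\<lambda>\<zeta>. if cmod \<zeta> < 1 then mob g \<zeta> else 0)"
      using fi unfolding isotropy_bar_def by blast
    have gG: "g \<in> Gt" using g(1) sub_Gt[OF sub] by blast
    obtain a where ga: "g = (0, a, 1)" using fix0[OF gG g(2)] by blast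
    have aB: "a \<in> B" using g(1) ga B_def by simp
    define c where "c = real k * pi"
    have c0: "c > 0" using k0 by (simp add: c_def)
    define m where "m = \<lfloor>a / c\<rfloor>"
    define b where "b = a + of_int (- m) * c"
    have bB: "b \<in> B" unfolding b_def c_def by (rule intB[OF aB])
    have "of_int m \<le> a / c" "a / c < of_int m + 1" unfolding m_def
      by (rule of_int_floor_le, rule real_of_int_floor_add_one_gt)
    then have "of_int m * c \<le> a" "a < (of_int m + 1) * c" using c0 by (simp_all add: field_simps)
    then have "0 \<le> b" "b < c" unfolding b_def by (simp_all add: algebra_simps)
    moreover have "f = fb b"
    proof -
      have "fb b = fb a" unfolding b_def by (rule fb_per) (simp add: c_def)
      moreover have "f = fb a" using g(3) unfolding ga fb_def .
      ultimately show ?thesis by simp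
    qed
    ultimately show ?thesis using bB c_def by blast
  qed
  define bf where "bf = (\<lambda>f. SOME b. b \<in> B \<and> 0 \<le> b \<and> b < real k * pi \<and> f = fb b)"
  have bf: "bf f \<in> B \<and> 0 \<le> bf f \<and> bf f < real k * pi \<and> f = fb (bf f)" if "f \<in> isotropy_bar \<Gamma> 0" for f
    unfolding bf_def using someI_ex[OF rep[OF that]] .
  define j where "j = (\<lambda>f. nat \<lfloor>bf f / pi\<rfloor>)"
  have jk: "j f \<in> {..<k}" if "f \<in> isotropy_bar \<Gamma> 0" for f
  proof -
    have "bf f / pi < real k" using bf[OF that] by (simp add: divide_simps)
    then have "\<lfloor>bf f / pi\<rfloor> < int k" by linarith
    then have "nat \<lfloor>bf f / pi\<rfloor> < k" using k0 by linarith
    then show ?thesis unfolding j_def by simp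
  qed
  have inj: "inj_on j (isotropy_bar \<Gamma> 0)"
  proof
    fix f f' assume f: "f \<in> isotropy_bar \<Gamma> 0" and f': "f' \<in> isotropy_bar \<Gamma> 0" and jj: "j f = j f'"
    have p1: "0 \<le> bf f / pi" "0 \<le> bf f' / pi" using bf[OF f] bf[OF f'] by simp_all
    have q1: "0 \<le> \<lfloor>bf f / pi\<rfloor>" "0 \<le> \<lfloor>bf f' / pi\<rfloor>" using p1 by simp_all
    have fl: "\<lfloor>bf f / pi\<rfloor> = \<lfloor>bf f' / pi\<rfloor>" using jj q1 unfolding j_def by (metis nat_0_le)
    have "\<bar>bf f / pi - bf f' / pi\<bar> < 1" using fl by linarith
    moreover have "bf f / pi - bf f' / pi = (bf f - bf f') / pi" by (simp add: diff_divide_distrib)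
    ultimately have "\<bar>bf f - bf f'\<bar> / pi < 1" by (simp add: abs_divide)
    then have "\<bar>bf f - bf f'\<bar> < pi" by (simp add: divide_less_eq)
    then have "bf f = bf f'" using diff0 bf[OF f] bf[OF f'] by blast
    moreover have "f = fb (bf f)" "f' = fb (bf f')" using bf[OF f] bf[OF f'] by blast+
    ultimately show "f = f'" by simp
  qed
  have "card (isotropy_bar \<Gamma> 0) \<le> card {..<k}"
    by (rule card_inj_on_le[OF inj]) (use jk in auto)
  then show False using pk by simp
qed

lemma bound_g:
  assumes g: "(zg,ag,rg) \<in> Gt" and c: "(zc,ac,rc) \<in> E0" and ac: "\<bar>ac\<bar> \<le> th/2"
    and th: "0 < th" "th < pi"
    and b: "act (zg,ag,rg) (zc,ac,rc) = (zb,ab,rb)"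
    and sb: "rb^2 - (cmod zb)^2 > \<sigma>" and sg: "\<sigma> > 0" and rbM: "rb \<le> M"
  shows "rg \<le> M * 2 / (\<sigma> * cos (th/2))" and "\<bar>ag\<bar> \<le> \<bar>ab\<bar> + pi"
proof -
  have gL: "(zg,ag,rg) \<in> Lt" using g Gt_sub_Lt by blast
  have cL: "(zc,ac,rc) \<in> Lt" and rcc: "rc * cos ac = 1" and aca: "\<bar>ac\<bar> < pi/2" using c by (auto simp: E0_def)
  have pos: "0 < rg" "cmod zg < rg" "0 < rc" "cmod zc < rc" using gL cL by (auto simp: Lt_iff)
  have ct: "cos (th/2) > 0" using th by (intro cos_gt_zero_pi) auto
  have "cos (th/2) \<le> cos \<bar>ac\<bar>" by (rule cos_monotone_0_pi_le) (use ac th in auto)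
  then have cac: "cos (th/2) \<le> cos ac" by simp
  have "rc * cos (th/2) \<le> rc * cos ac" using cac pos(3) by (simp add: mult_left_mono)
  then have rcb: "rc * cos (th/2) \<le> 1" using rcc by simp
  have bL: "(zb,ab,rb) \<in> Lt" using act_Lt[OF g cL] b by simp
  have rb0: "0 < rb" using bL by (simp add: Lt_iff)
  have "form (proj (act (zg,ag,rg) (zc,ac,rc))) (proj (act (zg,ag,rg) (zc,ac,rc))) = form (proj (zc,ac,rc)) (proj (zc,ac,rc))"
    by (rule form_act[OF g cL cL])
  then have "(cmod zb)^2 - rb^2 = (cmod zc)^2 - rc^2"
    using b pos(3) rb0 by (simp add: form_self proj_def norm_mult)
  then have sc: "rc^2 - (cmod zc)^2 > \<sigma>" using sb by simp
  have "rc^2 - (cmod zc)^2 = (rc - cmod zc) * (rc + cmod zc)" by (simp add: power2_eq_square algebra_simps)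
  also have "\<dots> \<le> (rc - cmod zc) * (2 * rc)" using pos by (intro mult_left_mono) auto
  finally have d1: "\<sigma> < (rc - cmod zc) * (2 * rc)" using sc by simp
  have "(rc - cmod zc) * (2 * rc) * cos (th/2) \<le> (rc - cmod zc) * 2"
  proof -
    have "(rc - cmod zc) * (2 * rc) * cos (th/2) = (rc - cmod zc) * 2 * (rc * cos (th/2))" by simp
    also have "\<dots> \<le> (rc - cmod zc) * 2 * 1" using rcb pos by (intro mult_left_mono) auto
    finally show ?thesis by simp
  qed
  moreover have "\<sigma> * cos (th/2) < (rc - cmod zc) * (2 * rc) * cos (th/2)"
    using d1 ct by (rule mult_strict_right_mono)
  ultimately have d2: "\<sigma> * cos (th/2) < (rc - cmod zc) * 2" by linarith
  have rbe: "rb = cmod (cnj zg * zc + (of_real rg * cis ag) * (of_real rc * cis ac))"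
    using b by (simp add: act_eq)
  have "cmod ((of_real rg * cis ag) * (of_real rc * cis ac)) \<le> cmod (cnj zg * zc + (of_real rg * cis ag) * (of_real rc * cis ac)) + cmod (cnj zg * zc)"
  proof -
    have "(of_real rg * cis ag) * (of_real rc * cis ac) = (cnj zg * zc + (of_real rg * cis ag) * (of_real rc * cis ac)) - cnj zg * zc"
      by simp
    then show ?thesis using norm_triangle_ineq4 by metis
  qed
  then have "rg * rc \<le> rb + cmod zg * cmod zc" using rbe pos by (simp add: norm_mult)
  moreover have "cmod zg * cmod zc \<le> rg * cmod zc" using pos by (intro mult_right_mono) auto
  ultimately have "rg * (rc - cmod zc) \<le> rb" by (simp add: algebra_simps)
  then have "rg * ((rc - cmod zc) * 2) \<le> rb * 2" by (simp only: mult.assoc[symmetric])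
  moreover have "rg * (\<sigma> * cos (th/2)) \<le> rg * ((rc - cmod zc) * 2)" using d2 pos by simp
  ultimately have "rg * (\<sigma> * cos (th/2)) \<le> M * 2" using rbM by linarith
  then show "rg \<le> M * 2 / (\<sigma> * cos (th/2))" using sg ct by (simp add: le_divide_eq)
  have "\<bar>fst (snd (act (zg,ag,rg) (zc,ac,rc))) - (ag + ac)\<bar> < pi / 2" by (rule act_angle[OF gL cL])
  then have "\<bar>ab - (ag + ac)\<bar> < pi/2" using b by simp
  then show "\<bar>ag\<bar> \<le> \<bar>ab\<bar> + pi" using aca by linarith
qed

theorem lemma4p3:
  fixes \<Gamma> :: "pt set" and k p :: nat and u :: complex
  assumes sub: "subgroup_Gt \<Gamma>"
    and disc: "discrete \<Gamma>"
    and lev: "has_level \<Gamma> k"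
    and u_disk: "cmod u < 1"
    and u_fix: "\<exists>g\<in>\<Gamma>. mob g u = u \<and> (\<exists>\<zeta>. cmod \<zeta> < 1 \<and> mob g \<zeta> \<noteq> \<zeta>)"
    and fin: "finite (isotropy_bar \<Gamma> u)"
    and ord: "card (isotropy_bar \<Gamma> u) = p"
    and pk: "p > k"
    and u0: "u = 0"
  shows "\<forall>a\<in>Lt. \<exists>U. open U \<and> a \<in> U \<and>
           finite {g \<in> \<Gamma>. Eg g \<inter> Qx \<Gamma> u (mob g u) \<inter> U \<noteq> {}}"
proof -
  have isoc: "card (isotropy_bar \<Gamma> 0) > k" using ord pk u0 by simp
  have fin0: "finite (isotropy_bar \<Gamma> 0)" using fin u0 by simp
  obtain th where th: "0 < th" "th < pi" "(0,th,1) \<in> \<Gamma>" using rot_exists[OF sub lev fin0 isoc] by blast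
  have th2: "(0,-th,1) \<in> \<Gamma>" using inv_in[OF sub th(3)] by (simp add: inv_t_def)
  have Hc: "c \<in> Hg (0, r, 1)"
    if g: "g \<in> \<Gamma>" and r: "(0, r, 1) \<in> \<Gamma>" and c: "c \<in> Lt" and bQ: "act g c \<in> Qx \<Gamma> 0 (mob g 0)" for g c r
  proof -
    have gG: "g \<in> Gt" using g sub_Gt[OF sub] by blast
    obtain zg ag rg where gg: "g = (zg,ag,rg)" by (cases g) auto
    define h1 where "h1 = act g (0, r, 1)"
    have h1G: "h1 \<in> \<Gamma>" using sub_act[OF sub g r] h1_def by simp
    have mh: "mob h1 0 = mob g 0" using mob_act_rot[of zg ag rg r] gG gg h1_def by simp
    have "act g c \<in> Hg h1" using bQ h1G mh unfolding Qx_def by blast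
    moreover have "Hg h1 = act g ` Hg (0, r, 1)"
      unfolding h1_def by (rule Hg_act[OF gG]) (use rot_Gt Gt_sub_Lt in blast)
    ultimately obtain c1 where c1: "c1 \<in> Hg (0, r, 1)" "act g c = act g c1" by blast
    have c1L: "c1 \<in> Lt" using c1(1) unfolding Hg_def by blast
    have "c = act (inv_t g) (act g c)" using act_inv2[OF gG c] by simp
    also have "\<dots> = c1" using c1(2) act_inv2[OF gG c1L] by simp
    finally show ?thesis using c1(1) by simp
  qed
  show ?thesis
  proof
    fix a assume aL: "a \<in> Lt"
    obtain za aa ra where aa: "a = (za,aa,ra)" by (cases a) auto
    have ra: "cmod za < ra" using aL aa by (simp add: Lt_iff)
    define \<sigma> where "\<sigma> = (ra^2 - (cmod za)^2)/2"
    have "(cmod za)^2 < ra^2" using ra by (intro power_strict_mono) auto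
    then have \<sigma>0: "\<sigma> > 0" by (simp add: \<sigma>_def)
    define U where "U = Lt \<inter> ball a 1 \<inter> {b. \<sigma> < (snd (snd b))^2 - (cmod (fst b))^2}"
    have oU: "open U" unfolding U_def
      by (intro open_Int open_Lt open_ball open_Collect_less continuous_intros)
    have aU: "a \<in> U" using aL \<sigma>0 by (simp add: U_def aa \<sigma>_def)
    define M where "M = ra + 1"
    define Rg where "Rg = M * 2 / (\<sigma> * cos (th/2))"
    define Ag where "Ag = \<bar>aa\<bar> + 1 + pi"
    define K where "K = cball (0::complex) Rg \<times> (cball (0::real) Ag \<times> cball (0::real) Rg)"
    have bK: "bounded K" unfolding K_def by (intro bounded_Times bounded_cball)
    have incl: "{g \<in> \<Gamma>. Eg g \<inter> Qx \<Gamma> u (mob g u) \<inter> U \<noteq> {}} \<subseteq> \<Gamma> \<inter> K"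
    proof
      fix g assume "g \<in> {g \<in> \<Gamma>. Eg g \<inter> Qx \<Gamma> u (mob g u) \<inter> U \<noteq> {}}"
      then obtain b where g: "g \<in> \<Gamma>" and bE: "b \<in> Eg g" and bQ: "b \<in> Qx \<Gamma> 0 (mob g 0)" and bU: "b \<in> U"
        using u0 by blast
      have gG: "g \<in> Gt" using g sub_Gt[OF sub] by blast
      obtain zg ag rg where gg: "g = (zg,ag,rg)" by (cases g) auto
      have "Eg g = Eg (act g e_t)" using act_e[OF gG] by simp
      also have "\<dots> = act g ` E0" using Eg_act[OF gG e_Lt] Ee by simp
      finally obtain c where cE0: "c \<in> E0" and bc: "b = act g c" using bE by blast
      have cL: "c \<in> Lt" using cE0 by (auto simp: E0_def)
      obtain zc ac rc where cc: "c = (zc,ac,rc)" by (cases c) auto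
      have h1: "\<not> (\<bar>ac - th\<bar> < pi/2 \<and> rc * cos (ac - th) > 1)"
        using H_rot[OF Hc[OF g th(3) cL]] bQ bc cc by simp
      have h2: "\<not> (\<bar>ac - (-th)\<bar> < pi/2 \<and> rc * cos (ac - (-th)) > 1)"
        using H_rot[OF Hc[OF g th2 cL]] bQ bc cc by simp
      have acb: "\<bar>ac\<bar> \<le> th/2" using key_angle[of zc ac rc th] cE0 cc th h1 h2 by simp
      obtain zb ab rb where bb: "b = (zb,ab,rb)" by (cases b) auto
      have sb: "rb^2 - (cmod zb)^2 > \<sigma>" using bU bb by (simp add: U_def)
      have db: "dist b a < 1" using bU by (simp add: U_def dist_commute)
      have "dist rb ra \<le> dist b a"
        using dist_snd_le[of "snd b" "snd a"] dist_snd_le[of b a] bb aa by simp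
      then have rbM: "rb \<le> M" using db by (simp add: M_def dist_real_def)
      have "dist ab aa \<le> dist b a"
        using dist_fst_le[of "snd b" "snd a"] dist_snd_le[of b a] bb aa by simp
      then have abA: "\<bar>ab\<bar> \<le> \<bar>aa\<bar> + 1" using db by (simp add: dist_real_def)
      have act_b: "act (zg,ag,rg) (zc,ac,rc) = (zb,ab,rb)" using bc gg cc bb by simp
      have gG': "(zg,ag,rg) \<in> Gt" using gG gg by simp
      have cE0': "(zc,ac,rc) \<in> E0" using cE0 cc by simp
      have b1: "rg \<le> Rg" unfolding Rg_def by (rule bound_g(1)[OF gG' cE0' acb th(1) th(2) act_b sb \<sigma>0 rbM])
      have b2: "\<bar>ag\<bar> \<le> \<bar>ab\<bar> + pi" by (rule bound_g(2)[OF gG' cE0' acb th(1) th(2) act_b sb \<sigma>0 rbM])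
      have gp: "0 < rg" "cmod zg < rg" using gG' by (auto simp: Gt_iff)
      have "g \<in> K" unfolding K_def gg using b1 b2 abA gp by (simp add: Ag_def)
      then show "g \<in> \<Gamma> \<inter> K" using g by blast
    qed
    have "finite {g \<in> \<Gamma>. Eg g \<inter> Qx \<Gamma> u (mob g u) \<inter> U \<noteq> {}}"
      by (rule finite_subset[OF incl fin_bounded[OF sub disc bK]])
    then show "\<exists>U. open U \<and> a \<in> U \<and> finite {g \<in> \<Gamma>. Eg g \<inter> Qx \<Gamma> u (mob g u) \<inter> U \<noteq> {}}"
      using oU aU by blast
  qed
qed

end
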